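(* The Lie algebra $T^*\mathfrak{su}(2)$ has no 5-dimensional Lie subalgebra. Moreover, if $\mathfrak{h}$ is a 4-dimensional Lie subalgebra of $T^*\mathfrak{su}(2)$ which is degenerate with respect to the canonical quadratic form, then there exists an automorphism $F$ of $\mathfrak{su}(2)$ such that $T^*F(\mathfrak{h})=\mathbb{R}e_1\oplus\mathfrak{su}(2)^*$.
   Context: $(e_1,e_2,e_3)$ is the basis of $\mathfrak{su}(2)$ given by $e_1=\frac12\begin{pmatrix}0&i\\ i&0\end{pmatrix}$, $e_2=\frac12\begin{pmatrix}0&1\\-1&0\end{pmatrix}$, $e_3=\frac12\begin{pmatrix}-i&0\\0&i\end{pmatrix}$, with $[e_1,e_2]=e_3$, $[e_2,e_3]=e_1$, $[e_3,e_1]=e_2$. For a Lie algebra $\mathfrak{g}$, $T^*\mathfrak{g}=\mathfrak{g}\oplus\mathfrak{g}^*$ with bracket $[u+\alpha,v+\beta]=[u,v]+\mathrm{ad}_u^*\beta-\mathrm{ad}_v^*\alpha$, where $(\mathrm{ad}_u^*\alpha)(v)=-\alpha([u,v])$, and canonical quadratic form $\langle u+\alpha,v+\beta\rangle=\alpha(v)+\beta(u)$. For an automorphism $F$ of $\mathfrak{g}$, $T^*F$ is the automorphism $u+\alpha\mapsto F(u)+(F^{-1})^*\alpha$ of $T^*\mathfrak{g}$. A subspace is degenerate if the restriction of the form to it is degenerate. *)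

theory Defs
  imports "HOL-Analysis.Analysis"
begin

text \<open>su(2) in coordinates w.r.t. the basis (e1,e2,e3): u = u$1 e1 + u$2 e2 + u$3 e3.
  The bracket is determined by [e1,e2]=e3, [e2,e3]=e1, [e3,e1]=e2.\<close>
type_synonym su2 = "real^3"

definition su2_e :: "3 \<Rightarrow> su2" where
  "su2_e i = axis i 1"

definition su2_bracket :: "su2 \<Rightarrow> su2 \<Rightarrow> su2" where
  "su2_bracket u v = vector [u$2 * v$3 - u$3 * v$2, u$3 * v$1 - u$1 * v$3, u$1 * v$2 - u$2 * v$1]"

text \<open>su(2)^* in coordinates w.r.t. the dual basis: alpha(v) = alpha \<bullet> v.\<close>
definition dual_apply :: "su2 \<Rightarrow> su2 \<Rightarrow> real" where
  "dual_apply \<alpha> v = \<alpha> \<bullet> v"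

definition coad :: "su2 \<Rightarrow> su2 \<Rightarrow> su2" where
  "coad u \<alpha> = (\<chi> i. - dual_apply \<alpha> (su2_bracket u (su2_e i)))"

type_synonym tsu2 = "su2 \<times> su2"

definition tstar_bracket :: "tsu2 \<Rightarrow> tsu2 \<Rightarrow> tsu2" where
  "tstar_bracket x y = (case x of (u, \<alpha>) \<Rightarrow> case y of (v, \<beta>) \<Rightarrow>
      (su2_bracket u v, coad u \<beta> - coad v \<alpha>))"

definition tstar_form :: "tsu2 \<Rightarrow> tsu2 \<Rightarrow> real" where
  "tstar_form x y = (case x of (u, \<alpha>) \<Rightarrow> case y of (v, \<beta>) \<Rightarrow>
      dual_apply \<alpha> v + dual_apply \<beta> u)"

definition tstar_subalgebra :: "tsu2 set \<Rightarrow> bool" where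
  "tstar_subalgebra h \<longleftrightarrow> subspace h \<and> (\<forall>x\<in>h. \<forall>y\<in>h. tstar_bracket x y \<in> h)"

definition tstar_degenerate :: "tsu2 set \<Rightarrow> bool" where
  "tstar_degenerate h \<longleftrightarrow> (\<exists>x\<in>h. x \<noteq> 0 \<and> (\<forall>y\<in>h. tstar_form x y = 0))"

definition su2_automorphism :: "(su2 \<Rightarrow> su2) \<Rightarrow> bool" where
  "su2_automorphism F \<longleftrightarrow> linear F \<and> bij F \<and>
     (\<forall>u v. F (su2_bracket u v) = su2_bracket (F u) (F v))"

text \<open>T^*F (u + alpha) = F u + (F^{-1})^* alpha, where ((F^{-1})^* alpha)(v) = alpha(F^{-1} v).\<close>
definition tstar_map :: "(su2 \<Rightarrow> su2) \<Rightarrow> tsu2 \<Rightarrow> tsu2" where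
  "tstar_map F x = (case x of (u, \<alpha>) \<Rightarrow>
      (F u, \<chi> i. dual_apply \<alpha> (inv F (su2_e i))))"

end

theory Submission
  imports Defs
begin
unbundle no cross3_syntax

lemma br: "su2_bracket = cross3"
  by (intro ext) (simp add: su2_bracket_def cross3_def)

lemma coad_eq: "coad u b = cross3 u b"
  by (simp add: coad_def dual_apply_def su2_e_def br cross3_simps forall_3 axis_def)

lemma tb: "tstar_bracket (u,a) (v,b) = (cross3 u v, cross3 u b - cross3 v a)"
  by (simp add: tstar_bracket_def br coad_eq)

lemma id1: "(a \<bullet> a) *\<^sub>R x = (a \<bullet> x) *\<^sub>R a + cross3 a (cross3 x a)" for a x :: "real^3"
  by (simp add: cross3_simps forall_3) 

lemma id2: "let n = cross3 u v; y = cross3 x n in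
   (n \<bullet> n) *\<^sub>R x = (n \<bullet> x) *\<^sub>R n - ((y \<bullet> v) *\<^sub>R u - (y \<bullet> u) *\<^sub>R v)" for u v x :: "real^3"
  by (simp add: Let_def cross3_simps forall_3) 


lemma rank:
  fixes h :: "tsu2 set"
  assumes sh: "subspace h"
  shows "dim h = dim (fst ` h) + dim {b. (0,b) \<in> h}"
proof -
  define P where "P = fst ` h"
  define K where "K = {b. (0::su2,b) \<in> h}"
  define Z :: "tsu2 set" where "Z = {x. fst x = 0}"
  define Pz :: "tsu2 set" where "Pz = (\<lambda>p. (p,0)) ` P"
  have lin1: "linear (\<lambda>p::su2. (p,0::su2))" by (simp add: linear_iff)
  have lin2: "linear (\<lambda>p::su2. (0::su2,p))" by (simp add: linear_iff)
  have sP: "subspace P" unfolding P_def by (rule linear_subspace_image[OF linear_fst sh])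
  have sK: "subspace K" using linear_subspace_vimage[OF lin2 sh] unfolding K_def by (simp add: vimage_def)
  have sZ: "subspace Z" unfolding Z_def subspace_def by auto
  have sPz: "subspace Pz" unfolding Pz_def by (rule linear_subspace_image[OF lin1 sP])
  have e1: "{x + y |x y. x \<in> h \<and> y \<in> Z} = {x + y |x y. x \<in> Pz \<and> y \<in> Z}"
  proof (intro set_eqI iffI)
    fix z assume "z \<in> {x + y |x y. x \<in> h \<and> y \<in> Z}"
    then obtain x y where "x \<in> h" "y \<in> Z" "z = x + y" by blast
    then show "z \<in> {x + y |x y. x \<in> Pz \<and> y \<in> Z}" unfolding Pz_def P_def Z_def
      by (intro CollectI exI[of _ "(fst x, 0)"] exI[of _ "(0, snd x + snd y)"]) (auto simp: prod_eq_iff)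
  next
    fix z assume "z \<in> {x + y |x y. x \<in> Pz \<and> y \<in> Z}"
    then obtain x y where "x \<in> h" "y \<in> Z" "z = (fst x,0) + y" unfolding Pz_def P_def by blast
    then show "z \<in> {x + y |x y. x \<in> h \<and> y \<in> Z}" unfolding Z_def
      by (intro CollectI exI[of _ x] exI[of _ "(0, snd y - snd x)"]) (auto simp: prod_eq_iff)
  qed
  have e2: "Pz \<inter> Z = {0}" using subspace_0[OF sPz] unfolding Pz_def Z_def by (auto simp: subspace_0 zero_prod_def)
  have e3: "h \<inter> Z = (\<lambda>p. (0,p)) ` K" unfolding K_def Z_def by (auto simp: prod_eq_iff)
  have e4: "Z = (\<lambda>p. (0,p)) ` UNIV" unfolding Z_def by (auto simp: prod_eq_iff)
  have d0: "dim (Pz \<inter> Z) = 0" using e2 dim_le_card[of "{0::tsu2}" "{}"] by simp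
  have dPz: "dim Pz = dim P" unfolding Pz_def by (rule dim_image_eq[OF lin1]) (auto simp: inj_on_def)
  have dK: "dim (h \<inter> Z) = dim K" unfolding e3 by (rule dim_image_eq[OF lin2]) (auto simp: inj_on_def)
  have dZ: "dim Z = dim (UNIV::su2 set)" unfolding e4 by (rule dim_image_eq[OF lin2]) (auto simp: inj_on_def)
  have "dim {x + y |x y. x \<in> Pz \<and> y \<in> Z} + dim (h \<inter> Z) = dim h + dim Z" using dim_sums_Int[OF sh sZ] e1 by simp
  moreover have "dim {x + y |x y. x \<in> Pz \<and> y \<in> Z} + dim (Pz \<inter> Z) = dim Pz + dim Z" by (rule dim_sums_Int[OF sPz sZ])
  ultimately show ?thesis using d0 dPz dK unfolding P_def K_def by linarith
qed


lemma inv_full: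
  fixes K :: "su2 set"
  assumes sK: "subspace K" and b: "b \<in> K" "b \<noteq> 0" and cl: "\<And>w c. c \<in> K \<Longrightarrow> cross3 w c \<in> K"
  shows "K = UNIV"
proof -
  have "x \<in> K" for x
  proof -
    have "(b \<bullet> x) *\<^sub>R b + cross3 b (cross3 x b) \<in> K"
      by (intro subspace_add[OF sK] subspace_scale[OF sK] cl b)
    then have "(b \<bullet> b) *\<^sub>R x \<in> K" using id1[of b x] by simp
    then have "inverse (b \<bullet> b) *\<^sub>R ((b \<bullet> b) *\<^sub>R x) \<in> K" by (rule subspace_scale[OF sK])
    then show ?thesis using b by simp
  qed
  then show ?thesis by auto
qed

lemma sub_full:
  fixes W :: "su2 set"
  assumes sW: "subspace W" and cl: "\<And>a c. a \<in> W \<Longrightarrow> c \<in> W \<Longrightarrow> cross3 a c \<in> W"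
    and uv: "u \<in> W" "v \<in> W" "cross3 u v \<noteq> 0"
  shows "W = UNIV"
proof -
  define n where "n = cross3 u v"
  have nW: "n \<in> W" unfolding n_def by (rule cl[OF uv(1,2)])
  have "x \<in> W" for x
  proof -
    define y where "y = cross3 x n"
    have "(n \<bullet> x) *\<^sub>R n - ((y \<bullet> v) *\<^sub>R u - (y \<bullet> u) *\<^sub>R v) \<in> W"
      by (intro subspace_diff[OF sW] subspace_scale[OF sW] nW uv)
    then have "(n \<bullet> n) *\<^sub>R x \<in> W" using id2[of u v x] unfolding n_def y_def Let_def by simp
    then have "inverse (n \<bullet> n) *\<^sub>R ((n \<bullet> n) *\<^sub>R x) \<in> W" by (rule subspace_scale[OF sW])
    then show ?thesis using uv(3) unfolding n_def by simp
  qed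
  then show ?thesis by auto
qed

lemma classify:
  assumes sa: "tstar_subalgebra h" and d: "dim h \<ge> 4"
  shows "dim h = 6 \<or> (dim h = 4 \<and> (\<exists>u. u \<noteq> 0 \<and> h = {(t *\<^sub>R u, \<alpha>) | t \<alpha>. True}))"
proof -
  have sh: "subspace h" and clh: "\<And>x y. x \<in> h \<Longrightarrow> y \<in> h \<Longrightarrow> tstar_bracket x y \<in> h"
    using sa unfolding tstar_subalgebra_def by auto
  define P where "P = fst ` h"
  define K where "K = {b. (0::su2,b) \<in> h}"
  have rk: "dim h = dim P + dim K" unfolding P_def K_def by (rule rank[OF sh])
  have sP: "subspace P" unfolding P_def by (rule linear_subspace_image[OF linear_fst sh])
  have lin2: "linear (\<lambda>p::su2. (0::su2,p))" by (simp add: linear_iff)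
  have sK: "subspace K" using linear_subspace_vimage[OF lin2 sh] unfolding K_def by (simp add: vimage_def)
  have cP: "cross3 a c \<in> P" if ac: "a \<in> P" "c \<in> P" for a c
  proof -
    obtain x y where "(a,x) \<in> h" "(c,y) \<in> h" using ac unfolding P_def by force
    from clh[OF this] show ?thesis unfolding P_def tb by force
  qed
  have cK: "cross3 a c \<in> K" if ac: "a \<in> P" "c \<in> K" for a c
  proof -
    obtain x where "(a,x) \<in> h" using ac unfolding P_def by force
    from clh[OF this, of "(0,c)"] ac show ?thesis unfolding K_def tb by simp
  qed
  have dP3: "dim P \<le> 3" and dK3: "dim K \<le> 3" using dim_subset_UNIV[of P] dim_subset_UNIV[of K] by auto
  show ?thesis
  proof (cases "\<exists>u\<in>P. \<exists>v\<in>P. cross3 u v \<noteq> 0")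
    case True
    then obtain u v where uv: "u \<in> P" "v \<in> P" "cross3 u v \<noteq> 0" by blast
    have PU: "P = UNIV" by (rule sub_full[OF sP cP uv])
    show ?thesis
    proof (cases "K \<subseteq> {0}")
      case True
      have "dim K \<le> 0" using dim_le_card[of K "{}"] True by simp
      then show ?thesis using rk dP3 d by linarith
    next
      case False
      then obtain b where b: "b \<in> K" "b \<noteq> 0" by blast
      have KU: "K = UNIV" by (rule inv_full[OF sK b]) (simp add: cK PU)
      have "h = UNIV"
      proof (intro set_eqI iffI)
        fix x :: tsu2
        have "fst x \<in> P" using PU by simp
        then obtain z where z: "z \<in> h" "fst z = fst x" unfolding P_def by force
        have "(0, snd x - snd z) \<in> h" using KU unfolding K_def by auto
        moreover have "z + (0, snd x - snd z) = x" using z(2) by (simp add: prod_eq_iff)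
        ultimately show "x \<in> h" using subspace_add[OF sh z(1)] by metis
      qed simp
      then show ?thesis by simp
    qed
  next
    case False
    then have c0: "\<And>u v. u \<in> P \<Longrightarrow> v \<in> P \<Longrightarrow> cross3 u v = 0" by blast
    show ?thesis
    proof (cases "P \<subseteq> {0}")
      case True
      have "dim P \<le> 0" using dim_le_card[of P "{}"] True by simp
      then show ?thesis using rk dK3 d by linarith
    next
      case False
      then obtain u where u: "u \<in> P" "u \<noteq> 0" by blast
      have Psp: "v \<in> span {u}" if "v \<in> P" for v
      proof -
        have "collinear {0,u,v}" using c0[OF u(1) that] cross_eq_0 by metis
        then have "v = 0 \<or> (\<exists>c. v = c *\<^sub>R u)" using u(2) collinear_lemma by blast
        then show ?thesis by (auto simp: span_0 span_mul span_base)
      qed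
      have "dim P \<le> 1" using dim_le_card[of P "{u}"] Psp by auto
      then have d4: "dim h = 4" and "dim K = 3" using rk dK3 d by linarith+
      then have "span K = UNIV" using dim_eq_full[of K] by simp
      then have KU: "K = UNIV" using span_eq_iff[of K] sK by simp
      obtain a0 where a0: "(u,a0) \<in> h" using u(1) unfolding P_def by force
      have "h = {(t *\<^sub>R u, \<alpha>) | t \<alpha>. True}"
      proof (intro set_eqI iffI)
        fix x :: tsu2 assume "x \<in> h"
        then have "fst x \<in> span {u}" using Psp unfolding P_def by auto
        then obtain t where "fst x = t *\<^sub>R u" by (auto simp: span_singleton)
        then show "x \<in> {(t *\<^sub>R u, \<alpha>) | t \<alpha>. True}" by (intro CollectI exI[of _ t] exI[of _ "snd x"]) (simp add: prod_eq_iff)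
      next
        fix x :: tsu2 assume "x \<in> {(t *\<^sub>R u, \<alpha>) | t \<alpha>. True}"
        then obtain t a where x: "x = (t *\<^sub>R u, a)" by blast
        have "(0, a - t *\<^sub>R a0) \<in> h" using KU unfolding K_def by auto
        from subspace_add[OF sh subspace_scale[OF sh a0, of t] this] show "x \<in> h" by (simp add: x)
      qed
      with d4 u show ?thesis by blast
    qed
  qed
qed


lemma rot:
  fixes u :: su2
  assumes u: "u \<noteq> 0"
  shows "\<exists>F. su2_automorphism F \<and>
     tstar_map F ` {(t *\<^sub>R u, \<alpha>) | t \<alpha>. True} = {(t *\<^sub>R su2_e 1, \<alpha>) | t \<alpha>. True}"
proof -
  have nn: "norm u = norm (norm u *\<^sub>R (axis 1 1 :: su2))" by simp
  obtain F where F: "orthogonal_transformation F" "det (matrix F) = 1" "F u = norm u *\<^sub>R axis 1 1"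
    using rotation_exists[OF _ nn] by auto
  have linF: "linear F" using F(1) orthogonal_transformation_linear by blast
  have bijF: "bij F" by (rule orthogonal_transformation_bij[OF F(1)])
  have crF: "F (su2_bracket x y) = su2_bracket (F x) (F y)" for x y
    using cross_orthogonal_transformation[OF F(1), of x y] F(2) by (simp add: br)
  have auto: "su2_automorphism F" unfolding su2_automorphism_def using linF bijF crF by blast
  have inn: "F a \<bullet> F b = a \<bullet> b" for a b using F(1) unfolding orthogonal_transformation_def by blast
  have fi: "F (inv F y) = y" for y using bijF by (simp add: bij_is_surj surj_f_inv_f)
  have tm: "tstar_map F (w, a) = (F w, F a)" for w a
  proof -
    have "(\<chi> i. dual_apply a (inv F (su2_e i))) = F a"
    proof (subst vec_eq_iff, intro allI)
      fix i
      have "dual_apply a (inv F (su2_e i)) = F a \<bullet> F (inv F (axis i 1))"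
        by (simp add: dual_apply_def su2_e_def inn)
      also have "\<dots> = F a $ i" by (simp add: fi inner_axis)
      finally show "(\<chi> i. dual_apply a (inv F (su2_e i))) $ i = F a $ i" by simp
    qed
    then show ?thesis by (simp add: tstar_map_def)
  qed
  have nu: "norm u \<noteq> 0" using u by simp
  have "tstar_map F ` {(t *\<^sub>R u, \<alpha>) | t \<alpha>. True} = {(t *\<^sub>R su2_e 1, \<alpha>) | t \<alpha>. True}"
  proof (intro set_eqI iffI)
    fix x :: tsu2 assume "x \<in> tstar_map F ` {(t *\<^sub>R u, \<alpha>) | t \<alpha>. True}"
    then obtain t a where x: "x = tstar_map F (t *\<^sub>R u, a)" by blast
    show "x \<in> {(t *\<^sub>R su2_e 1, \<alpha>) | t \<alpha>. True}"
      by (intro CollectI exI[of _ "t * norm u"] exI[of _ "F a"])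
        (simp add: x tm linear_cmul[OF linF] F(3) su2_e_def)
  next
    fix x :: tsu2 assume "x \<in> {(t *\<^sub>R su2_e 1, \<alpha>) | t \<alpha>. True}"
    then obtain t a where x: "x = (t *\<^sub>R su2_e 1, a)" by blast
    have "x = tstar_map F ((t / norm u) *\<^sub>R u, inv F a)"
      using nu by (simp add: x tm linear_cmul[OF linF] F(3) su2_e_def fi)
    then show "x \<in> tstar_map F ` {(t *\<^sub>R u, \<alpha>) | t \<alpha>. True}" by blast
  qed
  with auto show ?thesis by blast
qed

theorem mainTheorem12:
  shows "(\<nexists>h. tstar_subalgebra h \<and> dim h = 5) \<and>
         (\<forall>h. tstar_subalgebra h \<and> dim h = 4 \<and> tstar_degenerate h \<longrightarrow>
           (\<exists>F. su2_automorphism F \<and>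
                tstar_map F ` h = {(t *\<^sub>R su2_e 1, \<alpha>) | t \<alpha>. True}))"
proof (intro conjI allI impI notI)
  fix h assume "\<exists>h. tstar_subalgebra h \<and> dim h = 5"
  then obtain h where "tstar_subalgebra h" "dim h = 5" by blast
  with classify[of h] show False by auto
next
  fix h assume a: "tstar_subalgebra h \<and> dim h = 4 \<and> tstar_degenerate h"
  then obtain u where "u \<noteq> 0" "h = {(t *\<^sub>R u, \<alpha>) | t \<alpha>. True}" using classify[of h] by auto
  then show "\<exists>F. su2_automorphism F \<and> tstar_map F ` h = {(t *\<^sub>R su2_e 1, \<alpha>) | t \<alpha>. True}"
    using rot by simp
qed

end
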